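(* Let $l,n$ be positive integers, $\mathbf{x}_1,\dots,\mathbf{x}_l\in\mathbb{R}^n$, $y_1,\dots,y_l\in\mathbb{R}$, $a_1,\dots,a_l,b_1,\dots,b_l\in\mathbb{R}$. Let $\varphi:\mathbb{R}\to[0,\infty)$ be nonconstant, continuous and sublinear, with $\varphi^*=\iota_{[\alpha,\beta]}$, $\alpha<\beta$. Let $\mathbf Z\in\mathbb{R}^{l\times n}$ have $i$-th row $a_i\mathbf x_i^T$, $\bar{\mathbf y}=(b_1y_1,\dots,b_ly_l)^T$, and for $C>0$ let $\theta^*(C)$ denote an optimal solution of $$\min_{\theta\in[\alpha,\beta]^l}\ \tfrac{C}{2}\|\mathbf Z^T\theta\|^2-\langle\bar{\mathbf y},\theta\rangle.$$ Let $0<C_1<C_2<\dots<C_{\mathcal K}$ and suppose $\theta^*(C_k)$ is known for some integer $1\le k<\mathcal K$. If $$\tfrac{C_{k+1}+C_k}{2}\langle\mathbf Z^T\theta^*(C_k),a_i\mathbf x_i\rangle-\tfrac{C_{k+1}-C_k}{2}\|\mathbf Z^T\theta^*(C_k)\|\,\|a_i\mathbf x_i\|>b_iy_i,$$ then $[\theta^*(C_{k+1})]_i=\alpha$, i.e., $i\in\mathcal R$ (at $C=C_{k+1}$). Similarly, if $$\tfrac{C_{k+1}+C_k}{2}\langle\mathbf Z^T\theta^*(C_k),a_i\mathbf x_i\rangle+\tfrac{C_{k+1}-C_k}{2}\|\mathbf Z^T\theta^*(C_k)\|\,\|a_i\mathbf x_i\|<b_iy_i,$$ then $[\theta^*(C_{k+1})]_i=\beta$,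 i.e., $i\in\mathcal L$.
   Context: This dual corresponds to the primal problem $\min_{\mathbf w\in\mathbb{R}^n}\frac12\|\mathbf w\|^2+C\sum_{i=1}^l\varphi(\mathbf w^T(a_i\mathbf x_i)+b_iy_i)$ with unique solution $\mathbf w^*(C)=-C\mathbf Z^T\theta^*(C)$. Sublinear means convex and positively homogeneous; $\varphi^*(s)=\sup_t(st-\varphi(t))$; $\iota_{[\alpha,\beta]}$ is $0$ on $[\alpha,\beta]$, $+\infty$ elsewhere. At parameter $C$: $\mathcal R=\{i:-\langle\mathbf w^*(C),a_i\mathbf x_i\rangle>b_iy_i\}$, $\mathcal L=\{i:-\langle\mathbf w^*(C),a_i\mathbf x_i\rangle<b_iy_i\}$. *)

theory Defs
  imports "HOL-Analysis.Analysis"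
begin

definition sublinear :: "(real \<Rightarrow> real) \<Rightarrow> bool" where
  "sublinear f \<longleftrightarrow> convex_on UNIV f \<and> (\<forall>c t. c > 0 \<longrightarrow> f (c * t) = c * f t)"

definition fconj :: "(real \<Rightarrow> real) \<Rightarrow> real \<Rightarrow> ereal" where
  "fconj f s = (SUP t. ereal (s * t - f t))"

definition iota_interval :: "real \<Rightarrow> real \<Rightarrow> real \<Rightarrow> ereal" where
  "iota_interval a b s = (if a \<le> s \<and> s \<le> b then 0 else \<infinity>)"

definition Zmat :: "('l \<Rightarrow> real) \<Rightarrow> ('l \<Rightarrow> real^'n) \<Rightarrow> real^'n^'l" where
  "Zmat a x = (\<chi> i. a i *\<^sub>R x i)"

definition ybar :: "('l \<Rightarrow> real) \<Rightarrow> ('l \<Rightarrow> real) \<Rightarrow> real^'l" where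
  "ybar b y = (\<chi> i. b i * y i)"

definition dual_obj :: "real^'n^'l \<Rightarrow> real^'l \<Rightarrow> real \<Rightarrow> real^'l \<Rightarrow> real" where
  "dual_obj Z yb C \<theta> = C / 2 * (norm (transpose Z *v \<theta>))\<^sup>2 - inner yb \<theta>"

definition box :: "real \<Rightarrow> real \<Rightarrow> (real^'l) set" where
  "box_def": "box \<alpha> \<beta> = {\<theta>. \<forall>i. \<alpha> \<le> \<theta> $ i \<and> \<theta> $ i \<le> \<beta>}"

definition dual_opt :: "real^'n^'l \<Rightarrow> real^'l \<Rightarrow> real \<Rightarrow> real \<Rightarrow> real \<Rightarrow> real^'l \<Rightarrow> bool" where
  "dual_opt Z yb \<alpha> \<beta> C \<theta> \<longleftrightarrow> \<theta> \<in> box \<alpha> \<beta> \<and> (\<forall>\<theta>'\<in>box \<alpha> \<beta>. dual_obj Z yb C \<theta> \<le> dual_obj Z yb C \<theta>')"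

text \<open>Primal solution w*(C) = - C Z^T theta*(C).\<close>
definition wstar :: "real^'n^'l \<Rightarrow> real \<Rightarrow> real^'l \<Rightarrow> real^'n" where
  "wstar Z C \<theta> = - (C *\<^sub>R (transpose Z *v \<theta>))"

definition Rset :: "('l \<Rightarrow> real) \<Rightarrow> ('l \<Rightarrow> real^'n) \<Rightarrow> ('l \<Rightarrow> real) \<Rightarrow> ('l \<Rightarrow> real) \<Rightarrow> real^'n \<Rightarrow> 'l set" where
  "Rset a x b y w = {i. - inner w (a i *\<^sub>R x i) > b i * y i}"

definition Lset :: "('l \<Rightarrow> real) \<Rightarrow> ('l \<Rightarrow> real^'n) \<Rightarrow> ('l \<Rightarrow> real) \<Rightarrow> ('l \<Rightarrow> real) \<Rightarrow> real^'n \<Rightarrow> 'l set" where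
  "Lset a x b y w = {i. - inner w (a i *\<^sub>R x i) < b i * y i}"

end

theory Submission
  imports Defs
begin


lemma transpose_axis: "transpose (Z::real^'n^'l) *v axis i 1 = Z $ i"
  by (simp add: matrix_vector_mult_basis row_def vec_eq_iff)

lemma small_t:
  fixes L Q :: real
  assumes Q: "Q \<ge> 0" and h: "\<And>t. 0 < t \<Longrightarrow> t \<le> 1 \<Longrightarrow> L + t * Q \<ge> 0"
  shows "L \<ge> 0"
proof (rule ccontr)
  assume "\<not> L \<ge> 0"
  hence L: "L < 0" by simp
  define t where "t = min 1 (-L / (2*(Q+1)))"
  have t0: "0 < t" using L Q by (simp add: t_def divide_neg_pos)
  have t1: "t \<le> 1" by (simp add: t_def)
  have "t * Q \<le> (-L / (2*(Q+1))) * Q" using Q by (intro mult_right_mono) (auto simp: t_def)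
  also have "\<dots> \<le> -L/2"
  proof -
    have "(-L / (2*(Q+1))) * Q = (-L/2) * (Q/(Q+1))" using Q by (simp add: field_simps)
    also have "\<dots> \<le> (-L/2) * 1" using Q L by (intro mult_left_mono) auto
    finally show ?thesis by simp
  qed
  finally have "L + t*Q < 0" using L by linarith
  with h[OF t0 t1] show False by simp
qed

lemma VI:
  fixes Z :: "real^'n^'l::finite"
  assumes opt: "dual_opt Z yb \<alpha> \<beta> C \<theta>" and C: "C \<ge> 0" and th': "\<theta>' \<in> box \<alpha> \<beta>"
  shows "C * inner (transpose Z *v \<theta>) (transpose Z *v (\<theta>' - \<theta>)) - inner yb (\<theta>' - \<theta>) \<ge> 0"
proof -
  define u where "u = transpose Z *v \<theta>"
  define d where "d = \<theta>' - \<theta>"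
  define v where "v = transpose Z *v d"
  have thb: "\<theta> \<in> box \<alpha> \<beta>" and min: "\<And>\<eta>. \<eta> \<in> box \<alpha> \<beta> \<Longrightarrow> dual_obj Z yb C \<theta> \<le> dual_obj Z yb C \<eta>"
    using opt by (auto simp: dual_opt_def)
  show ?thesis unfolding d_def[symmetric] u_def[symmetric] v_def[symmetric]
  proof (rule small_t[of "C/2 * inner v v"])
    show "0 \<le> C / 2 * inner v v" using C by simp
  next
    fix t :: real assume t0: "0 < t" and t1: "t \<le> 1"
    define \<eta> where "\<eta> = \<theta> + t *\<^sub>R d"
    have "\<eta> \<in> box \<alpha> \<beta>"
    proof -
      { fix j
        have e: "\<eta> $ j = (1 - t) * \<theta> $ j + t * \<theta>' $ j" by (simp add: \<eta>_def d_def algebra_simps)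
        have a1: "\<alpha> \<le> \<theta> $ j" "\<theta> $ j \<le> \<beta>" using thb by (auto simp: box_def)
        have a2: "\<alpha> \<le> \<theta>' $ j" "\<theta>' $ j \<le> \<beta>" using th' by (auto simp: box_def)
        have "(1-t) * \<alpha> \<le> (1 - t) * \<theta> $ j" "(1 - t) * \<theta> $ j \<le> (1-t)*\<beta>"
          using a1 t1 by (auto intro: mult_left_mono)
        moreover have "t * \<alpha> \<le> t * \<theta>' $ j" "t * \<theta>' $ j \<le> t*\<beta>"
          using a2 t0 by (auto intro: mult_left_mono)
        ultimately have "\<alpha> \<le> \<eta> $ j \<and> \<eta> $ j \<le> \<beta>" unfolding e by (simp add: algebra_simps) }
      thus ?thesis by (simp add: box_def)
    qed
    hence le: "dual_obj Z yb C \<theta> \<le> dual_obj Z yb C \<eta>" by (rule min)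
    have ZT: "transpose Z *v \<eta> = u + t *\<^sub>R v"
      by (simp add: \<eta>_def u_def v_def d_def matrix_vector_right_distrib matrix_vector_mult_scaleR)
    have "dual_obj Z yb C \<eta> - dual_obj Z yb C \<theta>
        = t * (C * inner u v - inner yb d + t * (C/2 * inner v v))"
      unfolding dual_obj_def ZT u_def[symmetric] power2_norm_eq_inner
      by (simp add: \<eta>_def inner_add_left inner_add_right algebra_simps power2_eq_square inner_commute[of v u])
    with le have "0 \<le> t * (C * inner u v - inner yb d + t * (C/2 * inner v v))" by simp
    with t0 show "0 \<le> C * inner u v - inner yb d + t * (C / 2 * inner v v)"
      by (simp add: zero_le_mult_iff)
  qed
qed

theorem corollary1:
  fixes x :: "'l::finite \<Rightarrow> real^'n"
    and y a b :: "'l \<Rightarrow> real"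
    and \<phi> :: "real \<Rightarrow> real"
    and \<alpha> \<beta> :: real
    and C :: "nat \<Rightarrow> real"
    and K k :: nat
    and \<theta>k \<theta>k1 :: "real^'l"
    and i :: 'l
  assumes phi_nonneg: "\<forall>t. \<phi> t \<ge> 0"
    and phi_nonconst: "\<exists>s t. \<phi> s \<noteq> \<phi> t"
    and phi_cont: "continuous_on UNIV \<phi>"
    and phi_sublin: "sublinear \<phi>"
    and phi_conj: "\<forall>s. fconj \<phi> s = iota_interval \<alpha> \<beta> s"
    and alpha_beta: "\<alpha> < \<beta>"
    and C_pos: "0 < C 1"
    and C_mono: "\<forall>j. 1 \<le> j \<and> j < K \<longrightarrow> C j < C (Suc j)"
    and k_range: "1 \<le> k" "k < K"
    and opt_k: "dual_opt (Zmat a x) (ybar b y) \<alpha> \<beta> (C k) \<theta>k"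
    and opt_k1: "dual_opt (Zmat a x) (ybar b y) \<alpha> \<beta> (C (Suc k)) \<theta>k1"
  shows "((C (Suc k) + C k) / 2 * inner (transpose (Zmat a x) *v \<theta>k) (a i *\<^sub>R x i)
            - (C (Suc k) - C k) / 2 * norm (transpose (Zmat a x) *v \<theta>k) * norm (a i *\<^sub>R x i)
            > b i * y i
          \<longrightarrow> \<theta>k1 $ i = \<alpha> \<and> i \<in> Rset a x b y (wstar (Zmat a x) (C (Suc k)) \<theta>k1))
       \<and> ((C (Suc k) + C k) / 2 * inner (transpose (Zmat a x) *v \<theta>k) (a i *\<^sub>R x i)
            + (C (Suc k) - C k) / 2 * norm (transpose (Zmat a x) *v \<theta>k) * norm (a i *\<^sub>R x i)
            < b i * y i
          \<longrightarrow> \<theta>k1 $ i = \<beta> \<and> i \<in> Lset a x b y (wstar (Zmat a x) (C (Suc k)) \<theta>k1))"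
  proof -
  define Z where "Z = Zmat a x"
  define yb where "yb = ybar b y"
  define u1 where "u1 = transpose Z *v \<theta>k"
  define u2 where "u2 = transpose Z *v \<theta>k1"
  define c1 where "c1 = C k"
  define c2 where "c2 = C (Suc k)"
  define z where "z = a i *\<^sub>R x i"
  have Cge: "\<forall>j. 1 \<le> j \<longrightarrow> j \<le> K \<longrightarrow> C 1 \<le> C j"
  proof
    fix j show "1 \<le> j \<longrightarrow> j \<le> K \<longrightarrow> C 1 \<le> C j"
    proof (induction j)
      case (Suc j)
      show ?case
      proof (cases "j = 0")
        case False
        thus ?thesis using Suc C_mono by (metis Suc_leD less_Suc_eq_le less_imp_le_nat not_less_eq_eq order_trans linorder_not_le le_less_trans less_eq_real_def Suc_le_eq le_neq_implies_less)
      qed simp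
    qed simp
  qed
  have c1pos: "0 < c1" using Cge k_range C_pos unfolding c1_def by force
  have c12: "c1 < c2" using C_mono k_range unfolding c1_def c2_def by auto
  have o1: "dual_opt Z yb \<alpha> \<beta> c1 \<theta>k" and o2: "dual_opt Z yb \<alpha> \<beta> c2 \<theta>k1"
    using opt_k opt_k1 by (simp_all add: Z_def yb_def c1_def c2_def)
  have b1: "\<theta>k \<in> box \<alpha> \<beta>" and b2: "\<theta>k1 \<in> box \<alpha> \<beta>" using o1 o2 by (auto simp: dual_opt_def)
  have v1: "c1 * inner u1 (u2 - u1) - inner yb (\<theta>k1 - \<theta>k) \<ge> 0"
    using VI[OF o1 _ b2] c1pos by (simp add: u1_def u2_def matrix_vector_mult_diff_distrib)
  have v2: "c2 * inner u2 (u1 - u2) - inner yb (\<theta>k - \<theta>k1) \<ge> 0"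
    using VI[OF o2 _ b1] c1pos c12 by (simp add: u1_def u2_def matrix_vector_mult_diff_distrib)
  have "inner yb (\<theta>k - \<theta>k1) = - inner yb (\<theta>k1 - \<theta>k)" by (simp add: inner_diff_right)
  with v1 v2 have sum: "c1 * inner u1 (u2 - u1) + c2 * inner u2 (u1 - u2) \<ge> 0" by linarith
  define m where "m = ((c2 + c1)/2) *\<^sub>R u1"
  define r where "r = (c2 - c1)/2 * norm u1"
  have r0: "r \<ge> 0" using c12 by (simp add: r_def)
  have "(norm (c2 *\<^sub>R u2 - m))\<^sup>2 - r\<^sup>2 = - c2 * (c1 * inner u1 (u2 - u1) + c2 * inner u2 (u1 - u2))"
    unfolding m_def r_def power2_norm_eq_inner power_mult_distrib
    by (simp add: inner_diff_left inner_diff_right inner_commute[of u2 u1] algebra_simps power2_eq_square) (simp add: field_simps)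
  also have "\<dots> \<le> 0" using sum c1pos c12 by (simp add: mult_nonneg_nonneg)
  finally have "(norm (c2 *\<^sub>R u2 - m))\<^sup>2 \<le> r\<^sup>2" by simp
  hence nb: "norm (c2 *\<^sub>R u2 - m) \<le> r" using r0 by (meson abs_le_square_iff abs_of_nonneg norm_ge_zero order_trans abs_ge_self power2_le_imp_le)
  have cs: "\<bar>inner (c2 *\<^sub>R u2 - m) z\<bar> \<le> r * norm z"
    using Cauchy_Schwarz_ineq2[of "c2 *\<^sub>R u2 - m" z] nb by (meson mult_right_mono norm_ge_zero order_trans)
  have split: "c2 * inner u2 z = inner m z + inner (c2 *\<^sub>R u2 - m) z" by (simp add: inner_diff_left)
  have mz: "inner m z = (c2 + c1)/2 * inner u1 z" by (simp add: m_def)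
  have zrow: "transpose Z *v axis i 1 = z" unfolding transpose_axis Z_def Zmat_def z_def by simp
  have ybi: "yb $ i = b i * y i" by (simp add: yb_def ybar_def)
  define g where "g = c2 * inner u2 z - b i * y i"
  have comp: "(t - \<theta>k1 $ i) * g \<ge> 0" if "\<alpha> \<le> t" "t \<le> \<beta>" for t
  proof -
    define \<eta> where "\<eta> = \<theta>k1 + (t - \<theta>k1 $ i) *\<^sub>R axis i 1"
    have "\<eta> \<in> box \<alpha> \<beta>" using b2 that by (auto simp: box_def \<eta>_def axis_def)
    from VI[OF o2 _ this] c1pos c12
    have "0 \<le> c2 * inner u2 (transpose Z *v (\<eta> - \<theta>k1)) - inner yb (\<eta> - \<theta>k1)" by (simp add: u2_def)
    also have "\<eta> - \<theta>k1 = (t - \<theta>k1 $ i) *\<^sub>R axis i 1" by (simp add: \<eta>_def)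
    finally show ?thesis unfolding matrix_vector_mult_scaleR zrow
      by (simp add: inner_axis ybi g_def algebra_simps)
  qed
  have wr: "- inner (wstar Z c2 \<theta>k1) z = c2 * inner u2 z" by (simp add: wstar_def u2_def)
  show ?thesis
    unfolding Z_def[symmetric] yb_def[symmetric] c1_def[symmetric] c2_def[symmetric] z_def[symmetric]
      u1_def[symmetric]
  proof (intro conjI impI)
    assume h: "(c2 + c1) / 2 * inner u1 z - (c2 - c1) / 2 * norm u1 * norm z > b i * y i"
    have "g > 0" using h split mz cs unfolding g_def r_def by (smt (verit) abs_le_iff)
    moreover have "\<alpha> \<le> \<theta>k1 $ i" "\<theta>k1 $ i \<le> \<beta>" using b2 by (auto simp: box_def)
    ultimately show "\<theta>k1 $ i = \<alpha>" using comp[of \<alpha>] alpha_beta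
      by (smt (verit) mult_neg_pos)
    show "i \<in> Rset a x b y (wstar Z c2 \<theta>k1)"
      using \<open>g > 0\<close> wr by (simp add: Rset_def z_def g_def)
  next
    assume h: "(c2 + c1) / 2 * inner u1 z + (c2 - c1) / 2 * norm u1 * norm z < b i * y i"
    have "g < 0" using h split mz cs unfolding g_def r_def by (smt (verit) abs_le_iff)
    moreover have "\<alpha> \<le> \<theta>k1 $ i" "\<theta>k1 $ i \<le> \<beta>" using b2 by (auto simp: box_def)
    ultimately show "\<theta>k1 $ i = \<beta>" using comp[of \<beta>] alpha_beta
      by (smt (verit) mult_pos_neg)
    show "i \<in> Lset a x b y (wstar Z c2 \<theta>k1)"
      using \<open>g < 0\<close> wr by (simp add: Lset_def z_def g_def)
  qed
qed

end
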